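(* Let $d\ge 2$ be an integer and let $a_1,\ldots,a_{d-1}$ be indeterminates over $\mathbb{C}$. Let $f=x^d+a_1x^{d-1}+\cdots+a_{d-2}x^2+a_{d-1}x\in\mathbb{C}[a_1,\ldots,a_{d-1}][x]$ (monic of degree $d$ in $x$, with zero constant term). For $k\in\{1,\ldots,d-1\}$ let $$H_k(f)=\binom{d}{k}x^{d-k}+\binom{d-1}{k}a_1x^{d-k-1}+\cdots+\binom{k}{k}a_{d-k}$$ be the $k$-th Hasse derivative of $f$ (with $a_d=0$), and let $R_k=\operatorname{Res}_x(f,H_k(f))\in\mathbb{C}[a_1,\ldots,a_{d-1}]$ be the resultant of $f$ and $H_k(f)$ with respect to $x$. Let $i\in\{d-3,d-2,d-1\}$ with $i\ge 1$. Then $$R_i\notin\sqrt{(R_1,\ldots,R_{i-1},R_{i+1},\ldots,R_{d-1})},$$ where the ideal is the ideal of $\mathbb{C}[a_1,\ldots,a_{d-1}]$ generated by $\{R_1,\ldots,R_{d-1}\}\setminus\{R_i\}$ and $\sqrt{\cdot}$ denotes its radical.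
   Context: The paper works over the field $K=\mathbb{C}$ (it notes that the corresponding radical-membership statements depend only on the characteristic, which is zero). The $k$-th Hasse derivative $H_k(f)$ equals $\frac{1}{k!}\frac{d^k f}{dx^k}$. *)

theory Defs
  imports "HOL-Library.Poly_Mapping" "HOL-Computational_Algebra.Polynomial" "Subresultants.Resultant_Prelim"
begin

text \<open>The multivariate polynomial ring over the complex numbers, with variables indexed
  by natural numbers (variable j stands for the indeterminate a_j).\<close>
type_synonym cmpoly = "(nat \<Rightarrow>\<^sub>0 nat) \<Rightarrow>\<^sub>0 complex"

definition var :: "nat \<Rightarrow> cmpoly" where
  "var j = Poly_Mapping.single (Poly_Mapping.single j 1) 1"

definition hasse :: "nat \<Rightarrow> 'a::comm_semiring_1 poly \<Rightarrow> 'a poly" where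
  "hasse k p = (\<Sum>j\<le>degree p. monom (of_nat ((j + k) choose k) * coeff p (j + k)) j)"

definition gen_f :: "nat \<Rightarrow> cmpoly poly" where
  "gen_f d = monom 1 d + (\<Sum>j\<in>{1..d-1}. monom (var j) (d - j))"

definition Res :: "nat \<Rightarrow> nat \<Rightarrow> cmpoly" where
  "Res d k = resultant (gen_f d) (hasse k (gen_f d))"

definition in_ideal_gen :: "'a::comm_ring_1 \<Rightarrow> 'a set \<Rightarrow> bool" where
  "in_ideal_gen x S \<longleftrightarrow> (\<exists>c. x = (\<Sum>s\<in>S. c s * s))"

definition in_radical_gen :: "'a::comm_ring_1 \<Rightarrow> 'a set \<Rightarrow> bool" where
  "in_radical_gen x S \<longleftrightarrow> (\<exists>n. in_ideal_gen (x ^ n) S)"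

end

theory Submission imports Defs Subresultants.Subresultant_Gcd "HOL-Computational_Algebra.Fundamental_Theorem_Algebra" "HOL-Computational_Algebra.Field_as_Ring" "HOL-Computational_Algebra.Polynomial_Factorial"
begin

definition wt :: "nat \<Rightarrow> (nat \<Rightarrow>\<^sub>0 nat) \<Rightarrow> complex" where
  "wt j0 m = (if (\<forall>j. j \<noteq> j0 \<longrightarrow> Poly_Mapping.lookup m j = 0) then 1 else 0)"

definition ev :: "nat \<Rightarrow> cmpoly \<Rightarrow> complex" where
  "ev j0 p = (\<Sum>m\<in>Poly_Mapping.keys p. Poly_Mapping.lookup p m * wt j0 m)"

lemma wt_add: "wt j0 (a + b) = wt j0 a * wt j0 b"
  by (auto simp: wt_def lookup_add)

lemma ev_superset: "finite A \<Longrightarrow> Poly_Mapping.keys p \<subseteq> A \<Longrightarrow> ev j0 p = (\<Sum>m\<in>A. Poly_Mapping.lookup p m * wt j0 m)"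
  unfolding ev_def by (rule sum.mono_neutral_left) (auto simp: in_keys_iff)

lemma ev_add: "ev j0 (p + q) = ev j0 p + ev j0 q"
proof -
  let ?A = "Poly_Mapping.keys p \<union> Poly_Mapping.keys q"
  have "ev j0 (p + q) = (\<Sum>m\<in>?A. Poly_Mapping.lookup (p+q) m * wt j0 m)"
    by (rule ev_superset) (auto simp: keys_add)
  also have "\<dots> = (\<Sum>m\<in>?A. Poly_Mapping.lookup p m * wt j0 m) + (\<Sum>m\<in>?A. Poly_Mapping.lookup q m * wt j0 m)"
    by (simp add: lookup_add distrib_right sum.distrib)
  also have "\<dots> = ev j0 p + ev j0 q"
    by (subst (1 2) ev_superset[of ?A]) auto
  finally show ?thesis .
qed

lemma ev_zero: "ev j0 0 = 0" by (simp add: ev_def)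

lemma ev_single: "ev j0 (Poly_Mapping.single m c) = c * wt j0 m"
  by (subst ev_superset[of "{m}"]) auto

lemma ev_sum: "ev j0 (sum f A) = (\<Sum>x\<in>A. ev j0 (f x))"
  by (induction A rule: infinite_finite_induct) (auto simp: ev_zero ev_add)

lemma pm_expand: "(p::cmpoly) = (\<Sum>m\<in>Poly_Mapping.keys p. Poly_Mapping.single m (Poly_Mapping.lookup p m))"
  by (rule poly_mapping_eqI) (auto simp: lookup_sum lookup_single when_def in_keys_iff
      intro: sum.neutral split: if_splits)

lemma ev_mult: "ev j0 (p * q) = ev j0 p * ev j0 q"
proof -
  have "p * q = (\<Sum>m\<in>Poly_Mapping.keys p. Poly_Mapping.single m (Poly_Mapping.lookup p m)) * (\<Sum>m'\<in>Poly_Mapping.keys q. Poly_Mapping.single m' (Poly_Mapping.lookup q m'))"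
    using pm_expand[of p] pm_expand[of q] by simp
  also have "\<dots> = (\<Sum>m\<in>Poly_Mapping.keys p. \<Sum>m'\<in>Poly_Mapping.keys q. Poly_Mapping.single (m + m') (Poly_Mapping.lookup p m * Poly_Mapping.lookup q m'))"
    by (simp add: sum_distrib_left sum_distrib_right mult_single) (rule sum.swap)
  finally have "ev j0 (p * q) = (\<Sum>m\<in>Poly_Mapping.keys p. \<Sum>m'\<in>Poly_Mapping.keys q. Poly_Mapping.lookup p m * Poly_Mapping.lookup q m' * wt j0 (m + m'))"
    by (simp add: ev_sum ev_single)
  also have "\<dots> = ev j0 p * ev j0 q"
    by (simp add: ev_def wt_add sum_distrib_left sum_distrib_right mult_ac) (subst sum.swap, simp add: mult_ac)
  finally show ?thesis .
qed

lemma ev_one: "ev j0 1 = 1"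
proof -
  have "(1::cmpoly) = Poly_Mapping.single 0 1" by simp
  then have "ev j0 1 = ev j0 (Poly_Mapping.single 0 1)" by simp
  also have "\<dots> = 1" by (simp only: ev_single) (simp add: wt_def)
  finally show ?thesis .
qed

lemma ev_hom: "comm_ring_hom (ev j0)"
proof -
  have "ev j0 (- p) = - ev j0 p" for p
    using ev_add[of j0 p "-p"] by (simp add: ev_zero add.commute eq_neg_iff_add_eq_0)
  show ?thesis by unfold_locales (auto simp: ev_zero ev_one ev_add ev_mult)
qed

lemma coeff_hasse: "coeff (hasse k p) j = of_nat ((j + k) choose k) * coeff p (j + k)"
proof (cases "j \<le> degree p")
  case True
  then show ?thesis unfolding hasse_def coeff_sum coeff_monom
    by (simp add: sum.delta)
next
  case False
  then have "coeff p (j + k) = 0" by (intro coeff_eq_0) auto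
  then show ?thesis using False unfolding hasse_def coeff_sum coeff_monom
    by (simp add: sum.delta)
qed

lemma hasse_map: assumes "comm_ring_hom h"
  shows "map_poly h (hasse k p) = hasse k (map_poly h p)"
proof -
  interpret comm_ring_hom h by fact
  show ?thesis by (rule poly_eqI) (simp add: coeff_hasse hom_distribs)
qed

lemma degree_hasse:
  fixes p :: "'a::{comm_semiring_1,semiring_char_0} poly"
  assumes "coeff p (degree p) = 1" "k \<le> degree p"
  shows "degree (hasse k p) = degree p - k"
proof (rule antisym)
  show "degree (hasse k p) \<le> degree p - k"
    by (rule degree_le) (auto simp: coeff_hasse coeff_eq_0)
  have "coeff (hasse k p) (degree p - k) = of_nat (degree p choose k)"
    using assms by (simp add: coeff_hasse)
  moreover have "(of_nat (degree p choose k) :: 'a) \<noteq> 0"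
    using assms(2) by simp
  ultimately show "degree p - k \<le> degree (hasse k p)"
    by (metis le_degree)
qed

lemma ev_var: "ev j0 (var j) = (if j = j0 then 1 else 0)"
  by (auto simp: var_def ev_single wt_def lookup_single when_def)

lemma coeff_gen_f_d: "coeff (gen_f d) d = 1"
  by (auto simp: gen_f_def coeff_sum coeff_monom intro!: sum.neutral)

lemma degree_gen_f: "degree (gen_f d) = d"
proof (rule antisym)
  show "degree (gen_f d) \<le> d" unfolding gen_f_def
    by (intro degree_add_le degree_sum_le) (auto intro: order.trans[OF degree_monom_le])
  show "d \<le> degree (gen_f d)" using coeff_gen_f_d[of d] by (metis le_degree zero_neq_one)
qed

definition Q :: "nat \<Rightarrow> nat \<Rightarrow> complex poly" where
  "Q d i = monom 1 d + monom 1 i"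

lemma map_gen_f: assumes "1 \<le> j0" "j0 \<le> d - 1"
  shows "map_poly (ev j0) (gen_f d) = Q d (d - j0)"
proof -
  interpret H: comm_ring_hom "ev j0" by (rule ev_hom)
  interpret M: map_poly_comm_ring_hom "ev j0" ..
  have "map_poly (ev j0) (gen_f d) = monom 1 d + (\<Sum>j\<in>{1..d-1}. monom (ev j0 (var j)) (d - j))"
    unfolding gen_f_def by (simp add: hom_distribs M.hom_sum)
  also have "(\<Sum>j\<in>{1..d-1}. monom (ev j0 (var j)) (d - j)) = (\<Sum>j\<in>{1..d-1}. if j = j0 then monom 1 (d - j) else 0)"
    by (intro sum.cong) (auto simp: ev_var)
  also have "\<dots> = monom 1 (d - j0)" using assms by (simp add: sum.delta)
  finally show ?thesis by (simp add: Q_def)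
qed

lemma coeff_Q: "i < d \<Longrightarrow> coeff (Q d i) d = 1"
  by (simp add: Q_def coeff_monom)

lemma degree_Q: "i < d \<Longrightarrow> degree (Q d i) = d"
  unfolding Q_def by (subst degree_add_eq_left) (auto simp: degree_monom_eq)

lemma ev_Res: assumes "1 \<le> j0" "j0 \<le> d - 1" "k \<le> d"
  shows "ev j0 (Res d k) = resultant (Q d (d - j0)) (hasse k (Q d (d - j0)))"
proof -
  interpret H: comm_ring_hom "ev j0" by (rule ev_hom)
  have lt: "d - j0 < d" using assms by auto
  have m: "map_poly (ev j0) (gen_f d) = Q d (d - j0)" by (rule map_gen_f[OF assms(1,2)])
  have d1: "degree (map_poly (ev j0) (gen_f d)) = degree (gen_f d)"
    using m degree_Q[OF lt] degree_gen_f by simp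
  have d2: "degree (map_poly (ev j0) (hasse k (gen_f d))) = degree (hasse k (gen_f d))"
    unfolding hasse_map[OF ev_hom] m
    using degree_hasse[of "Q d (d - j0)" k] degree_hasse[of "gen_f d" k]
      degree_Q[OF lt] coeff_Q[OF lt] degree_gen_f coeff_gen_f_d assms by simp
  show ?thesis unfolding Res_def
    using H.resultant_map_poly[OF d1 d2] m hasse_map[OF ev_hom] by simp
qed

lemma Q_ne0: "i < d \<Longrightarrow> Q d i \<noteq> 0"
  using coeff_Q[of i d] by auto

lemma Res_zero: assumes "1 \<le> i" "i < d" "k < d" "k \<noteq> i"
  shows "resultant (Q d i) (hasse k (Q d i)) = 0"
proof -
  have "poly (Q d i) 0 = 0" using assms by (simp add: Q_def poly_monom power_0_left)
  then have a: "[:0, 1:] dvd Q d i" using poly_eq_0_iff_dvd[of "Q d i" 0] by simp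
  have "poly (hasse k (Q d i)) 0 = 0" using assms
    by (simp add: poly_0_coeff_0 coeff_hasse Q_def coeff_monom)
  then have b: "[:0, 1:] dvd hasse k (Q d i)" using poly_eq_0_iff_dvd[of "hasse k (Q d i)" 0] by simp
  from a b have "[:0, 1:] dvd gcd (Q d i) (hasse k (Q d i))" by simp
  moreover have "gcd (Q d i) (hasse k (Q d i)) \<noteq> 0" using Q_ne0[OF assms(2)] by simp
  ultimately have "degree [:0::complex, 1:] \<le> degree (gcd (Q d i) (hasse k (Q d i)))"
    by (rule dvd_imp_degree_le)
  then show ?thesis by (simp add: resultant_0_gcd)
qed

lemma binom_ne1: assumes "1 \<le> i" "i < d" shows "d choose i \<noteq> 1"
proof -
  obtain n where d: "d = Suc n" using assms by (cases d) auto
  obtain m where i: "i = Suc m" using assms by (cases i) auto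
  have "d choose i = (n choose m) + (n choose Suc m)" by (simp add: d i)
  moreover have "n choose m > 0" "n choose Suc m > 0" using assms d i by auto
  ultimately show ?thesis by linarith
qed

lemma hasse_Q: assumes "i < d" shows "hasse i (Q d i) = monom (of_nat (d choose i)) (d - i) + 1"
proof (rule poly_eqI)
  fix j show "coeff (hasse i (Q d i)) j = coeff (monom (of_nat (d choose i)) (d - i) + 1) j"
    using assms by (auto simp: coeff_hasse Q_def coeff_monom coeff_1)
qed

lemma Res_nonzero: assumes "1 \<le> i" "i < d"
  shows "resultant (Q d i) (hasse i (Q d i)) \<noteq> 0"
proof
  assume "resultant (Q d i) (hasse i (Q d i)) = 0"
  then have "degree (gcd (Q d i) (hasse i (Q d i))) \<noteq> 0" by (simp add: resultant_0_gcd)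
  then have "\<not> constant (poly (gcd (Q d i) (hasse i (Q d i))))"
    by (subst constant_degree) simp
  then obtain z where z: "poly (gcd (Q d i) (hasse i (Q d i))) z = 0"
    using fundamental_theorem_of_algebra by blast
  have "poly (Q d i) z = 0"
    using z by (metis gcd_dvd1 poly_eq_0_iff_dvd dvd_trans)
  then have z1: "z ^ d + z ^ i = 0" by (simp add: Q_def poly_monom)
  have "poly (hasse i (Q d i)) z = 0"
    using z by (metis gcd_dvd2 poly_eq_0_iff_dvd dvd_trans)
  then have z2: "of_nat (d choose i) * z ^ (d - i) + 1 = 0"
    using assms by (simp add: hasse_Q poly_monom)
  show False
  proof (cases "z = 0")
    case True
    then show False using z2 assms by (simp add: power_0_left)
  next
    case False
    have "z ^ d = z ^ i * z ^ (d - i)" using assms by (simp flip: power_add)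
    then have "z ^ i * (z ^ (d - i) + 1) = 0" using z1 by (simp add: algebra_simps)
    then have "z ^ (d - i) = -1" using False by (simp add: add_eq_0_iff2)
    then have "of_nat (d choose i) = (1::complex)" using z2 by (simp add: add_eq_0_iff2)
    then have "d choose i = 1" by (metis of_nat_1 of_nat_eq_iff)
    then show False using binom_ne1 assms by blast
  qed
qed

theorem theorem1p8:
  fixes d i :: nat
  assumes "d \<ge> 2" and "i \<in> {d - 3, d - 2, d - 1}" and "i \<ge> 1"
  shows "\<not> in_radical_gen (Res d i) (Res d ` ({1..d - 1} - {i}))"
proof
  interpret H: comm_ring_hom "ev (d - i)" by (rule ev_hom)
  have i: "1 \<le> i" "i < d" using assms by auto
  have j0: "1 \<le> d - i" "d - i \<le> d - 1" "d - (d - i) = i" using i by auto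
  assume "in_radical_gen (Res d i) (Res d ` ({1..d - 1} - {i}))"
  then obtain n c where eq: "Res d i ^ n = (\<Sum>s\<in>Res d ` ({1..d - 1} - {i}). c s * s)"
    unfolding in_radical_gen_def in_ideal_gen_def by blast
  have "ev (d - i) s = 0" if "s \<in> Res d ` ({1..d - 1} - {i})" for s
  proof -
    from that obtain k where k: "k \<in> {1..d-1} - {i}" "s = Res d k" by (rule imageE)
    then show ?thesis using ev_Res[OF j0(1,2), of k] j0(3) Res_zero[OF i, of k] by auto
  qed
  then have "ev (d - i) (Res d i) ^ n = 0"
    using arg_cong[OF eq, of "ev (d - i)"] by (simp add: hom_distribs H.hom_sum)
  then have "ev (d - i) (Res d i) = 0" by simp
  moreover have "ev (d - i) (Res d i) \<noteq> 0"
    using ev_Res[OF j0(1,2), of i] j0(3) Res_nonzero[OF i] i by simp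
  ultimately show False by simp
qed

end
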